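(* Let $\mathcal{C}$ be a category, $\rho$ a canonical PBPO rule with components $l : K \to L$, $r : K \to R$, $t_L : L \to L'$, $t_K : K \to K'$, $t_R : R \to R'$, $l' : K' \to L'$, $r' : K' \to R'$. Let $G_L$ be an object and let $m' \circ e : L \to G_L$ be a morphism with $m' : L_c \rightarrowtail G_L$ a monomorphism and $e : L \twoheadrightarrow L_c$ an epimorphism, and assume $t_L = t_{L_c} \circ e$ for some (necessarily unique) $t_{L_c} : L_c \to L'$ and that the compacted rule $\rho_e$ exists. Then for all $\alpha : G_L \to L'$ and all objects $G_R$: $G_L \Rightarrow_\rho^{(m' \circ e),\alpha} G_R$ if and only if $G_L \Rightarrow_{\rho_e}^{m',\alpha} G_R$.
   Context: A PBPO rule consists of objects $L,K,R,L',K',R'$ and morphisms $l : K \to L$, $r : K \to R$, $t_L : L \to L'$, $t_K : K \to K'$, $t_R : R \to R'$, $l' : K' \to L'$, $r' : K' \to R'$ with $t_L \circ l = l' \circ t_K$ and $t_R \circ r = r' \circ t_K$. It is canonical if $L \xleftarrow{l} K \xrightarrow{t_K} K'$ is a pullback of $t_L, l'$ and $K' \xrightarrow{r'} R' \xleftarrow{t_R} R$ is a pushout of $t_K, r$. A PBPO rewrite step $G_L \Rightarrow_\rho^{m,\alpha} G_R$ is given by morphisms $m : L \to G_L$, $\alpha : G_L \to L'$ with $t_L = \alpha \circ m$; a pullback $G_L \xleftarrow{g_L} G_K \xrightarrow{u'} K'$ of $\alpha$ and $l'$; the unique $u : K \to G_K$ with $g_L \circ u = m \circ l$ and $u' \circ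 u = t_K$; a pushout $G_K \xrightarrow{g_R} G_R \xleftarrow{w} R$ of $u$ and $r$; and the unique $w' : G_R \to R'$ with $w' \circ g_R = r' \circ u'$ and $w' \circ w = t_R$. Compacted rule: for a canonical PBPO rule $\rho$ and a factorization $t_L = t_{L_c} \circ e$ with $e : L \to L_c$ epi, let $L_c \xleftarrow{k} K_c \xrightarrow{t_{K_c}} K'$ be a pullback of $t_{L_c}$ and $l'$; let $e_K : K \to K_c$ be the unique morphism with $k \circ e_K = e \circ l$ and $t_{K_c} \circ e_K = t_K$; let $K_c \xrightarrow{r_c} R_c \xleftarrow{e_R} R$ be a pushout of $e_K$ and $r$; and let $t_{R_c} : R_c \to R'$ be the unique morphism with $t_{R_c} \circ r_c = r' \circ t_{K_c}$ and $t_{R_c} \circ e_R = t_R$. The compacted rule $\rho_e$ is the (canonical) PBPO rule with $L_c \xleftarrow{k} K_c \xrightarrow{r_c} R_c$, $L' \xleftarrow{l'} K' \xrightarrow{r'} R'$ and typings $t_{L_c}, t_{K_c}, t_{R_c}$. *)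

theory Defs
  imports Main
begin

record ('o, 'a) cat =
  Obj  :: "'o set"
  Arr  :: "'a set"
  Dom  :: "'a \<Rightarrow> 'o"
  Cod  :: "'a \<Rightarrow> 'o"
  Comp :: "'a \<Rightarrow> 'a \<Rightarrow> 'a"   (* Comp C g f  =  g \<circ> f, defined when Cod f = Dom g *)
  Ide  :: "'o \<Rightarrow> 'a"

definition category :: "('o, 'a) cat \<Rightarrow> bool" where
  "category C \<longleftrightarrow>
     (\<forall>f\<in>Arr C. Dom C f \<in> Obj C \<and> Cod C f \<in> Obj C) \<and>
     (\<forall>A\<in>Obj C. Ide C A \<in> Arr C \<and> Dom C (Ide C A) = A \<and> Cod C (Ide C A) = A) \<and>
     (\<forall>f\<in>Arr C. \<forall>g\<in>Arr C. Cod C f = Dom C g \<longrightarrow>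
        Comp C g f \<in> Arr C \<and> Dom C (Comp C g f) = Dom C f \<and> Cod C (Comp C g f) = Cod C g) \<and>
     (\<forall>f\<in>Arr C. \<forall>g\<in>Arr C. \<forall>h\<in>Arr C. Cod C f = Dom C g \<longrightarrow> Cod C g = Dom C h \<longrightarrow>
        Comp C h (Comp C g f) = Comp C (Comp C h g) f) \<and>
     (\<forall>f\<in>Arr C. Comp C (Ide C (Cod C f)) f = f \<and> Comp C f (Ide C (Dom C f)) = f)"

definition hom :: "('o, 'a) cat \<Rightarrow> 'a \<Rightarrow> 'o \<Rightarrow> 'o \<Rightarrow> bool" where
  "hom C f A B \<longleftrightarrow> f \<in> Arr C \<and> Dom C f = A \<and> Cod C f = B"

definition is_mono :: "('o, 'a) cat \<Rightarrow> 'a \<Rightarrow> bool" where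
  "is_mono C m \<longleftrightarrow> m \<in> Arr C \<and>
     (\<forall>g\<in>Arr C. \<forall>h\<in>Arr C. Cod C g = Dom C m \<longrightarrow> Cod C h = Dom C m \<longrightarrow> Dom C g = Dom C h \<longrightarrow>
        Comp C m g = Comp C m h \<longrightarrow> g = h)"

definition is_epi :: "('o, 'a) cat \<Rightarrow> 'a \<Rightarrow> bool" where
  "is_epi C e \<longleftrightarrow> e \<in> Arr C \<and>
     (\<forall>g\<in>Arr C. \<forall>h\<in>Arr C. Dom C g = Cod C e \<longrightarrow> Dom C h = Cod C e \<longrightarrow> Cod C g = Cod C h \<longrightarrow>
        Comp C g e = Comp C h e \<longrightarrow> g = h)"

definition is_pullback :: "('o, 'a) cat \<Rightarrow> 'a \<Rightarrow> 'a \<Rightarrow> 'a \<Rightarrow> 'a \<Rightarrow> bool" where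
  "is_pullback C f g p q \<longleftrightarrow>
     f \<in> Arr C \<and> g \<in> Arr C \<and> p \<in> Arr C \<and> q \<in> Arr C \<and>
     Cod C f = Cod C g \<and> Dom C p = Dom C q \<and> Cod C p = Dom C f \<and> Cod C q = Dom C g \<and>
     Comp C f p = Comp C g q \<and>
     (\<forall>x\<in>Arr C. \<forall>y\<in>Arr C. Cod C x = Dom C f \<longrightarrow> Cod C y = Dom C g \<longrightarrow> Dom C x = Dom C y \<longrightarrow>
        Comp C f x = Comp C g y \<longrightarrow>
        (\<exists>!u. hom C u (Dom C x) (Dom C p) \<and> Comp C p u = x \<and> Comp C q u = y))"

definition is_pushout :: "('o, 'a) cat \<Rightarrow> 'a \<Rightarrow> 'a \<Rightarrow> 'a \<Rightarrow> 'a \<Rightarrow> bool" where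
  "is_pushout C f g p q \<longleftrightarrow>
     f \<in> Arr C \<and> g \<in> Arr C \<and> p \<in> Arr C \<and> q \<in> Arr C \<and>
     Dom C f = Dom C g \<and> Cod C p = Cod C q \<and> Dom C p = Cod C f \<and> Dom C q = Cod C g \<and>
     Comp C p f = Comp C q g \<and>
     (\<forall>x\<in>Arr C. \<forall>y\<in>Arr C. Dom C x = Cod C f \<longrightarrow> Dom C y = Cod C g \<longrightarrow> Cod C x = Cod C y \<longrightarrow>
        Comp C x f = Comp C y g \<longrightarrow>
        (\<exists>!u. hom C u (Cod C p) (Cod C x) \<and> Comp C u p = x \<and> Comp C u q = y))"

definition pbpo_rule :: "('o, 'a) cat \<Rightarrow> 'a \<Rightarrow> 'a \<Rightarrow> 'a \<Rightarrow> 'a \<Rightarrow> 'a \<Rightarrow> 'a \<Rightarrow> 'a \<Rightarrow> bool" where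
  "pbpo_rule C l r tL tK tR l' r' \<longleftrightarrow>
     l \<in> Arr C \<and> r \<in> Arr C \<and> tL \<in> Arr C \<and> tK \<in> Arr C \<and> tR \<in> Arr C \<and> l' \<in> Arr C \<and> r' \<in> Arr C \<and>
     Dom C r = Dom C l \<and> Dom C tK = Dom C l \<and>
     Dom C tL = Cod C l \<and> Dom C tR = Cod C r \<and>
     Dom C l' = Cod C tK \<and> Dom C r' = Cod C tK \<and>
     Cod C l' = Cod C tL \<and> Cod C r' = Cod C tR \<and>
     Comp C tL l = Comp C l' tK \<and> Comp C tR r = Comp C r' tK"

definition canonical_pbpo_rule :: "('o, 'a) cat \<Rightarrow> 'a \<Rightarrow> 'a \<Rightarrow> 'a \<Rightarrow> 'a \<Rightarrow> 'a \<Rightarrow> 'a \<Rightarrow> 'a \<Rightarrow> bool" where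
  "canonical_pbpo_rule C l r tL tK tR l' r' \<longleftrightarrow>
     pbpo_rule C l r tL tK tR l' r' \<and>
     is_pullback C tL l' l tK \<and>
     is_pushout C tK r r' tR"

definition pbpo_step ::
  "('o, 'a) cat \<Rightarrow> 'a \<Rightarrow> 'a \<Rightarrow> 'a \<Rightarrow> 'a \<Rightarrow> 'a \<Rightarrow> 'a \<Rightarrow> 'a \<Rightarrow> 'a \<Rightarrow> 'a \<Rightarrow> 'o \<Rightarrow> 'o \<Rightarrow> bool" where
  "pbpo_step C l r tL tK tR l' r' m \<alpha> GL GR \<longleftrightarrow>
     hom C m (Cod C l) GL \<and> hom C \<alpha> GL (Cod C tL) \<and> tL = Comp C \<alpha> m \<and>
     (\<exists>gL u' u gR w w'.
        is_pullback C \<alpha> l' gL u' \<and>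
        hom C u (Dom C l) (Dom C gL) \<and> Comp C gL u = Comp C m l \<and> Comp C u' u = tK \<and>
        is_pushout C u r gR w \<and> Cod C gR = GR \<and>
        hom C w' GR (Cod C tR) \<and> Comp C w' gR = Comp C r' u' \<and> Comp C w' w = tR)"

definition compacted_rule ::
  "('o, 'a) cat \<Rightarrow> 'a \<Rightarrow> 'a \<Rightarrow> 'a \<Rightarrow> 'a \<Rightarrow> 'a \<Rightarrow> 'a \<Rightarrow> 'a \<Rightarrow> 'a \<Rightarrow> 'a \<Rightarrow>
    'a \<Rightarrow> 'a \<Rightarrow> 'a \<Rightarrow> 'a \<Rightarrow> 'a \<Rightarrow> 'a \<Rightarrow> bool" where
  "compacted_rule C l r tL tK tR l' r' e tLc k tKc eK rc eR tRc \<longleftrightarrow>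
     canonical_pbpo_rule C l r tL tK tR l' r' \<and>
     is_epi C e \<and> Dom C e = Cod C l \<and> hom C tLc (Cod C e) (Cod C tL) \<and> tL = Comp C tLc e \<and>
     is_pullback C tLc l' k tKc \<and>
     hom C eK (Dom C l) (Dom C k) \<and> Comp C k eK = Comp C e l \<and> Comp C tKc eK = tK \<and>
     is_pushout C eK r rc eR \<and>
     hom C tRc (Cod C rc) (Cod C tR) \<and> Comp C tRc rc = Comp C r' tKc \<and> Comp C tRc eR = tR"

end

theory Submission
  imports Defs
begin

lemma cc:
  assumes "category C" "f \<in> Arr C" "g \<in> Arr C" "Cod C f = Dom C g"
  shows "Comp C g f \<in> Arr C" "Dom C (Comp C g f) = Dom C f" "Cod C (Comp C g f) = Cod C g"
  using assms unfolding category_def by auto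

lemma cassoc:
  assumes "category C" "f \<in> Arr C" "g \<in> Arr C" "h \<in> Arr C" "Cod C f = Dom C g" "Cod C g = Dom C h"
  shows "Comp C (Comp C h g) f = Comp C h (Comp C g f)"
  using assms unfolding category_def by metis

lemma pb_facts:
  assumes "is_pullback C f g p q"
  shows "f \<in> Arr C" "g \<in> Arr C" "p \<in> Arr C" "q \<in> Arr C"
     "Cod C f = Cod C g" "Dom C p = Dom C q" "Cod C p = Dom C f" "Cod C q = Dom C g"
     "Comp C f p = Comp C g q"
  using assms unfolding is_pullback_def by auto

lemma po_facts:
  assumes "is_pushout C f g p q"
  shows "f \<in> Arr C" "g \<in> Arr C" "p \<in> Arr C" "q \<in> Arr C"
     "Dom C f = Dom C g" "Cod C p = Cod C q" "Dom C p = Cod C f" "Dom C q = Cod C g"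
     "Comp C p f = Comp C q g"
  using assms unfolding is_pushout_def by auto

lemma pb_ex1:
  assumes "is_pullback C f g p q" "x \<in> Arr C" "y \<in> Arr C" "Cod C x = Dom C f" "Cod C y = Dom C g"
    "Dom C x = Dom C y" "Comp C f x = Comp C g y"
  shows "\<exists>!u. hom C u (Dom C x) (Dom C p) \<and> Comp C p u = x \<and> Comp C q u = y"
    using assms unfolding is_pullback_def by blast

lemma po_ex1:
  assumes "is_pushout C f g p q" "x \<in> Arr C" "y \<in> Arr C" "Dom C x = Cod C f" "Dom C y = Cod C g"
    "Cod C x = Cod C y" "Comp C x f = Comp C y g"
  shows "\<exists>!u. hom C u (Cod C p) (Cod C x) \<and> Comp C u p = x \<and> Comp C u q = y"
    using assms unfolding is_pushout_def by blast

lemma pb_univ: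
  assumes "is_pullback C f g p q" "x \<in> Arr C" "y \<in> Arr C" "Cod C x = Dom C f" "Cod C y = Dom C g"
    "Dom C x = Dom C y" "Comp C f x = Comp C g y"
  obtains u where "u \<in> Arr C" "Dom C u = Dom C x" "Cod C u = Dom C p" "Comp C p u = x" "Comp C q u = y"
proof -
  have "\<exists>!u. hom C u (Dom C x) (Dom C p) \<and> Comp C p u = x \<and> Comp C q u = y"
    using assms unfolding is_pullback_def by blast
  then show ?thesis using that unfolding hom_def by blast
qed

lemma pb_uniq:
  assumes "category C" "is_pullback C f g p q" "u \<in> Arr C" "v \<in> Arr C" "Cod C u = Dom C p" "Cod C v = Dom C p"
    "Dom C u = Dom C v" "Comp C p u = Comp C p v" "Comp C q u = Comp C q v"
  shows "u = v"
proof -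
  note F = pb_facts[OF assms(2)]
  have x: "Comp C p u \<in> Arr C" "Cod C (Comp C p u) = Dom C f" "Dom C (Comp C p u) = Dom C u"
    using cc[OF assms(1) assms(3) F(3)] assms F by auto
  have y: "Comp C q u \<in> Arr C" "Cod C (Comp C q u) = Dom C g" "Dom C (Comp C q u) = Dom C u"
    using cc[OF assms(1) assms(3) F(4)] assms F by auto
  have e: "Comp C f (Comp C p u) = Comp C g (Comp C q u)"
    using cassoc[OF assms(1) assms(3) F(3) F(1)] cassoc[OF assms(1) assms(3) F(4) F(2)] F assms by metis
  have "\<exists>!w. hom C w (Dom C (Comp C p u)) (Dom C p) \<and> Comp C p w = Comp C p u \<and> Comp C q w = Comp C q u"
    by (rule pb_ex1[OF assms(2) x(1) y(1) x(2) y(2)]) (use x y e in auto)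
  then have U: "\<And>a b. hom C a (Dom C (Comp C p u)) (Dom C p) \<and> Comp C p a = Comp C p u \<and> Comp C q a = Comp C q u
     \<Longrightarrow> hom C b (Dom C (Comp C p u)) (Dom C p) \<and> Comp C p b = Comp C p u \<and> Comp C q b = Comp C q u \<Longrightarrow> a = b"
    by blast
  show ?thesis apply (rule U) using assms x unfolding hom_def by auto
qed

lemma po_univ:
  assumes "is_pushout C f g p q" "x \<in> Arr C" "y \<in> Arr C" "Dom C x = Cod C f" "Dom C y = Cod C g"
    "Cod C x = Cod C y" "Comp C x f = Comp C y g"
  obtains u where "u \<in> Arr C" "Dom C u = Cod C p" "Cod C u = Cod C x" "Comp C u p = x" "Comp C u q = y"
proof -
  have "\<exists>!u. hom C u (Cod C p) (Cod C x) \<and> Comp C u p = x \<and> Comp C u q = y"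
    using assms unfolding is_pushout_def by blast
  then show ?thesis using that unfolding hom_def by blast
qed

lemma po_uniq:
  assumes "category C" "is_pushout C f g p q" "u \<in> Arr C" "v \<in> Arr C" "Dom C u = Cod C p" "Dom C v = Cod C p"
    "Cod C u = Cod C v" "Comp C u p = Comp C v p" "Comp C u q = Comp C v q"
  shows "u = v"
proof -
  note F = po_facts[OF assms(2)]
  have x: "Comp C u p \<in> Arr C" "Dom C (Comp C u p) = Cod C f" "Cod C (Comp C u p) = Cod C u"
    using cc[OF assms(1) F(3) assms(3)] assms F by auto
  have y: "Comp C u q \<in> Arr C" "Dom C (Comp C u q) = Cod C g" "Cod C (Comp C u q) = Cod C u"
    using cc[OF assms(1) F(4) assms(3)] assms F by auto
  have e: "Comp C (Comp C u p) f = Comp C (Comp C u q) g"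
    using cassoc[OF assms(1) F(1) F(3) assms(3)] cassoc[OF assms(1) F(2) F(4) assms(3)] F assms by metis
  have "\<exists>!w. hom C w (Cod C p) (Cod C (Comp C u p)) \<and> Comp C w p = Comp C u p \<and> Comp C w q = Comp C u q"
    by (rule po_ex1[OF assms(2) x(1) y(1) x(2) y(2)]) (use x y e in auto)
  then have U: "\<And>a b. hom C a (Cod C p) (Cod C (Comp C u p)) \<and> Comp C a p = Comp C u p \<and> Comp C a q = Comp C u q
     \<Longrightarrow> hom C b (Cod C p) (Cod C (Comp C u p)) \<and> Comp C b p = Comp C u p \<and> Comp C b q = Comp C u q \<Longrightarrow> a = b"
    by blast
  show ?thesis apply (rule U) using assms x unfolding hom_def by auto
qed

lemma po_compose:
  assumes C: "category C" and L: "is_pushout C eK r rc eR" and R: "is_pushout C uc rc gR wc"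
  shows "is_pushout C (Comp C uc eK) r gR (Comp C wc eR)"
proof -
  note FL = po_facts[OF L] and FR = po_facts[OF R]
  have t1: "Comp C uc eK \<in> Arr C" "Dom C (Comp C uc eK) = Dom C eK" "Cod C (Comp C uc eK) = Cod C uc"
    using cc[OF C FL(1) FR(1)] FL FR by auto
  have t2: "Comp C wc eR \<in> Arr C" "Dom C (Comp C wc eR) = Dom C eR" "Cod C (Comp C wc eR) = Cod C wc"
    using cc[OF C FL(4) FR(4)] FL FR by auto
  have comm: "Comp C gR (Comp C uc eK) = Comp C (Comp C wc eR) r"
  proof -
    have "Comp C gR (Comp C uc eK) = Comp C (Comp C gR uc) eK"
      using cassoc[OF C FL(1) FR(1) FR(3)] FL FR by simp
    also have "\<dots> = Comp C (Comp C wc rc) eK" using FR by simp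
    also have "\<dots> = Comp C wc (Comp C rc eK)"
      using cassoc[OF C FL(1) FL(3) FR(4)] FL FR by simp
    also have "\<dots> = Comp C wc (Comp C eR r)" using FL by simp
    also have "\<dots> = Comp C (Comp C wc eR) r"
      using cassoc[OF C FL(2) FL(4) FR(4)] FL FR by simp
    finally show ?thesis .
  qed
  have univ: "\<exists>!u. hom C u (Cod C gR) (Cod C x) \<and> Comp C u gR = x \<and> Comp C u (Comp C wc eR) = y"
    if x: "x \<in> Arr C" and y: "y \<in> Arr C" and dx: "Dom C x = Cod C (Comp C uc eK)" and dy: "Dom C y = Cod C r"
      and cxy: "Cod C x = Cod C y" and exy: "Comp C x (Comp C uc eK) = Comp C y r" for x y
  proof -
    have dx': "Dom C x = Cod C uc" using dx t1 by simp
    have xu: "Comp C x uc \<in> Arr C" "Dom C (Comp C x uc) = Dom C uc" "Cod C (Comp C x uc) = Cod C x"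
      using cc[OF C FR(1) x] dx' by auto
    have e1: "Comp C (Comp C x uc) eK = Comp C y r"
      using cassoc[OF C FL(1) FR(1) x] FL FR dx' exy by simp
    obtain z where z: "z \<in> Arr C" "Dom C z = Cod C rc" "Cod C z = Cod C x" "Comp C z rc = Comp C x uc" "Comp C z eR = y"
      using po_univ[OF L xu(1) y] xu FL FR dy cxy e1 by auto
    obtain v where v: "v \<in> Arr C" "Dom C v = Cod C gR" "Cod C v = Cod C x" "Comp C v gR = x" "Comp C v wc = z"
      using po_univ[OF R x z(1)] dx' z FR by auto
    have vy: "Comp C v (Comp C wc eR) = y"
    proof -
      have "Comp C v (Comp C wc eR) = Comp C (Comp C v wc) eR"
        using cassoc[OF C FL(4) FR(4) v(1)] FL FR v by simp
      then show ?thesis using v z by simp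
    qed
    show ?thesis
    proof (rule ex1I[where a=v])
      show "hom C v (Cod C gR) (Cod C x) \<and> Comp C v gR = x \<and> Comp C v (Comp C wc eR) = y"
        using v vy unfolding hom_def by auto
    next
      fix v' assume "hom C v' (Cod C gR) (Cod C x) \<and> Comp C v' gR = x \<and> Comp C v' (Comp C wc eR) = y"
      then have v': "v' \<in> Arr C" "Dom C v' = Cod C gR" "Cod C v' = Cod C x" "Comp C v' gR = x"
        "Comp C v' (Comp C wc eR) = y" unfolding hom_def by auto
      have vw: "Comp C v' wc \<in> Arr C" "Dom C (Comp C v' wc) = Dom C wc" "Cod C (Comp C v' wc) = Cod C v'"
        using cc[OF C FR(4) v'(1)] FR v' by auto
      have a1: "Comp C (Comp C v' wc) rc = Comp C z rc"
      proof -
        have "Comp C (Comp C v' wc) rc = Comp C v' (Comp C wc rc)"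
          using cassoc[OF C FL(3) FR(4) v'(1)] FL FR v' by simp
        also have "\<dots> = Comp C v' (Comp C gR uc)" using FR by simp
        also have "\<dots> = Comp C (Comp C v' gR) uc"
          using cassoc[OF C FR(1) FR(3) v'(1)] FR v' by simp
        finally show ?thesis using v' z by simp
      qed
      have a2: "Comp C (Comp C v' wc) eR = Comp C z eR"
        using cassoc[OF C FL(4) FR(4) v'(1)] FL FR v' z by simp
      have "Comp C v' wc = z"
        by (rule po_uniq[OF C L vw(1) z(1)]) (use vw FR FL v' z a1 a2 in auto)
      then show "v' = v"
        by (intro po_uniq[OF C R v'(1) v(1)]) (use v v' in auto)
    qed
  qed
  show ?thesis unfolding is_pushout_def
    using t1 t2 comm univ FL FR by auto
qed

lemma po_right:
  assumes C: "category C" and L: "is_pushout C eK r rc eR" and O: "is_pushout C (Comp C uc eK) r gR w"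
    and uc: "uc \<in> Arr C" "Dom C uc = Cod C eK"
    and wc: "wc \<in> Arr C" "Dom C wc = Cod C rc" "Cod C wc = Cod C gR"
    and sq: "Comp C wc rc = Comp C gR uc" and tri: "Comp C wc eR = w"
  shows "is_pushout C uc rc gR wc"
proof -
  note FL = po_facts[OF L] and FO = po_facts[OF O]
  have t1: "Dom C (Comp C uc eK) = Dom C eK" "Cod C (Comp C uc eK) = Cod C uc"
    using cc[OF C FL(1) uc(1)] uc by auto
  have univ: "\<exists>!u. hom C u (Cod C gR) (Cod C x) \<and> Comp C u gR = x \<and> Comp C u wc = y"
    if x: "x \<in> Arr C" and y: "y \<in> Arr C" and dx: "Dom C x = Cod C uc" and dy: "Dom C y = Cod C rc"
      and cxy: "Cod C x = Cod C y" and exy: "Comp C x uc = Comp C y rc" for x y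
  proof -
    have ye: "Comp C y eR \<in> Arr C" "Dom C (Comp C y eR) = Dom C eR" "Cod C (Comp C y eR) = Cod C y"
      using cc[OF C FL(4) y] FL dy by auto
    have e1: "Comp C x (Comp C uc eK) = Comp C (Comp C y eR) r"
    proof -
      have "Comp C x (Comp C uc eK) = Comp C (Comp C x uc) eK"
        using cassoc[OF C FL(1) uc(1) x] uc dx by simp
      also have "\<dots> = Comp C (Comp C y rc) eK" using exy by simp
      also have "\<dots> = Comp C y (Comp C rc eK)"
        using cassoc[OF C FL(1) FL(3) y] FL dy by simp
      also have "\<dots> = Comp C y (Comp C eR r)" using FL by simp
      also have "\<dots> = Comp C (Comp C y eR) r"
        using cassoc[OF C FL(2) FL(4) y] FL dy by simp
      finally show ?thesis .
    qed
    obtain v where v: "v \<in> Arr C" "Dom C v = Cod C gR" "Cod C v = Cod C x" "Comp C v gR = x" "Comp C v w = Comp C y eR"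
      using po_univ[OF O x ye(1)] t1 dx ye FL cxy e1 by auto
    have vw: "Comp C v wc \<in> Arr C" "Dom C (Comp C v wc) = Dom C wc" "Cod C (Comp C v wc) = Cod C v"
      using cc[OF C wc(1) v(1)] wc v by auto
    have a1: "Comp C (Comp C v wc) rc = Comp C y rc"
    proof -
      have "Comp C (Comp C v wc) rc = Comp C v (Comp C wc rc)"
        using cassoc[OF C FL(3) wc(1) v(1)] wc v by simp
      also have "\<dots> = Comp C v (Comp C gR uc)" using sq by simp
      also have "\<dots> = Comp C (Comp C v gR) uc"
        using cassoc[OF C uc(1) FO(3) v(1)] FO t1 v by simp
      finally show ?thesis using v exy by simp
    qed
    have a2: "Comp C (Comp C v wc) eR = Comp C y eR"
      using cassoc[OF C FL(4) wc(1) v(1)] FL wc v tri by simp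
    have vy: "Comp C v wc = y"
      by (rule po_uniq[OF C L vw(1) y]) (use vw wc FL v dy cxy a1 a2 in auto)
    show ?thesis
    proof (rule ex1I[where a=v])
      show "hom C v (Cod C gR) (Cod C x) \<and> Comp C v gR = x \<and> Comp C v wc = y"
        using v vy unfolding hom_def by auto
    next
      fix v' assume "hom C v' (Cod C gR) (Cod C x) \<and> Comp C v' gR = x \<and> Comp C v' wc = y"
      then have v': "v' \<in> Arr C" "Dom C v' = Cod C gR" "Cod C v' = Cod C x" "Comp C v' gR = x"
        "Comp C v' wc = y" unfolding hom_def by auto
      have "Comp C v' w = Comp C y eR"
        using cassoc[OF C FL(4) wc(1) v'(1)] FL wc v' tri by simp
      then show "v' = v"
        by (intro po_uniq[OF C O v'(1) v(1)]) (use v v' in auto)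
    qed
  qed
  show ?thesis unfolding is_pushout_def
    using uc wc sq univ FL FO t1 by auto
qed

lemma epi_cancel:
  assumes "is_epi C e" "g \<in> Arr C" "h \<in> Arr C" "Dom C g = Cod C e" "Dom C h = Cod C e"
    "Cod C g = Cod C h" "Comp C g e = Comp C h e"
  shows "g = h"
  using assms unfolding is_epi_def by blast

theorem lemma4:
  fixes C :: "('o, 'a) cat"
  assumes "category C"
    and "canonical_pbpo_rule C l r tL tK tR l' r'"
    and "GL \<in> Obj C"
    and "is_mono C m'" and "hom C m' Lc GL"
    and "is_epi C e" and "hom C e (Cod C l) Lc"
    and "hom C tLc Lc (Cod C tL)" and "tL = Comp C tLc e"
    and "compacted_rule C l r tL tK tR l' r' e tLc k tKc eK rc eR tRc"
  shows "\<forall>\<alpha> GR. pbpo_step C l r tL tK tR l' r' (Comp C m' e) \<alpha> GL GR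
            \<longleftrightarrow> pbpo_step C k rc tLc tKc tRc l' r' m' \<alpha> GL GR"
proof -
  note C = assms(1)
  have R: "l \<in> Arr C" "r \<in> Arr C" "tL \<in> Arr C" "tK \<in> Arr C" "tR \<in> Arr C" "l' \<in> Arr C" "r' \<in> Arr C"
     "Dom C r = Dom C l" "Dom C tK = Dom C l"
     "Dom C tL = Cod C l" "Dom C tR = Cod C r"
     "Dom C l' = Cod C tK" "Dom C r' = Cod C tK"
     "Cod C l' = Cod C tL" "Cod C r' = Cod C tR"
    using assms(2) unfolding canonical_pbpo_rule_def pbpo_rule_def by auto
  have m': "m' \<in> Arr C" "Dom C m' = Lc" "Cod C m' = GL" using assms(5) unfolding hom_def by auto
  have e: "e \<in> Arr C" "Dom C e = Cod C l" "Cod C e = Lc" using assms(7) unfolding hom_def by auto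
  have tLc: "tLc \<in> Arr C" "Dom C tLc = Lc" "Cod C tLc = Cod C tL" using assms(8) unfolding hom_def by auto
  have PBc: "is_pullback C tLc l' k tKc" and POc: "is_pushout C eK r rc eR"
    and eK: "eK \<in> Arr C" "Dom C eK = Dom C l" "Cod C eK = Dom C k"
    and keK: "Comp C k eK = Comp C e l" and tKceK: "Comp C tKc eK = tK"
    and tRc: "tRc \<in> Arr C" "Dom C tRc = Cod C rc" "Cod C tRc = Cod C tR"
    and tRc1: "Comp C tRc rc = Comp C r' tKc" and tRc2: "Comp C tRc eR = tR"
    using assms(10) unfolding compacted_rule_def hom_def by auto
  note FPc = pb_facts[OF PBc] and FOc = po_facts[OF POc]
  have me: "Comp C m' e \<in> Arr C" "Dom C (Comp C m' e) = Cod C l" "Cod C (Comp C m' e) = GL"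
    using cc[OF C e(1) m'(1)] e m' by auto
  have mk: "Comp C m' k \<in> Arr C" "Dom C (Comp C m' k) = Dom C k" "Cod C (Comp C m' k) = GL"
    using cc[OF C FPc(3) m'(1)] FPc tLc m' by auto
  show ?thesis
  proof (intro allI iffI)
    fix \<alpha> GR
    assume S: "pbpo_step C l r tL tK tR l' r' (Comp C m' e) \<alpha> GL GR"
    then obtain gL u' u gR w w' where
      al: "hom C \<alpha> GL (Cod C tL)" "tL = Comp C \<alpha> (Comp C m' e)" and
      PB: "is_pullback C \<alpha> l' gL u'" and
      u: "hom C u (Dom C l) (Dom C gL)" "Comp C gL u = Comp C (Comp C m' e) l" "Comp C u' u = tK" and
      PO: "is_pushout C u r gR w" "Cod C gR = GR" and
      w': "hom C w' GR (Cod C tR)" "Comp C w' gR = Comp C r' u'" "Comp C w' w = tR"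
      unfolding pbpo_step_def by blast
    note FP = pb_facts[OF PB]
    have alpha: "\<alpha> \<in> Arr C" "Dom C \<alpha> = GL" "Cod C \<alpha> = Cod C tL" using al(1) unfolding hom_def by auto
    have am: "Comp C \<alpha> m' \<in> Arr C" "Dom C (Comp C \<alpha> m') = Lc" "Cod C (Comp C \<alpha> m') = Cod C tL"
      using cc[OF C m'(1) alpha(1)] m' alpha by auto
    have tLc_eq: "tLc = Comp C \<alpha> m'"
    proof (rule epi_cancel[OF assms(6) tLc(1) am(1)])
      show "Comp C tLc e = Comp C (Comp C \<alpha> m') e"
        using cassoc[OF C e(1) m'(1) alpha(1)] e m' alpha al(2) assms(9) by simp
    qed (use tLc am e in auto)
    have "Comp C \<alpha> (Comp C m' k) = Comp C l' tKc"
      using cassoc[OF C FPc(3) m'(1) alpha(1)] FPc m' alpha tLc tLc_eq by simp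
    then obtain uc where uc: "uc \<in> Arr C" "Dom C uc = Dom C k" "Cod C uc = Dom C gL"
        "Comp C gL uc = Comp C m' k" "Comp C u' uc = tKc"
      using pb_univ[OF PB mk(1) FPc(4)] mk FPc FP alpha by auto
    have u_eq: "u = Comp C uc eK"
    proof -
      have a: "Comp C uc eK \<in> Arr C" "Dom C (Comp C uc eK) = Dom C l" "Cod C (Comp C uc eK) = Dom C gL"
        using cc[OF C eK(1) uc(1)] eK uc by auto
      have b: "Comp C gL (Comp C uc eK) = Comp C gL u"
      proof -
        have "Comp C gL (Comp C uc eK) = Comp C (Comp C gL uc) eK"
          using cassoc[OF C eK(1) uc(1) FP(3)] eK uc FP by simp
        also have "\<dots> = Comp C m' (Comp C k eK)"
          using uc cassoc[OF C eK(1) FPc(3) m'(1)] eK FPc tLc m' by simp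
        also have "\<dots> = Comp C (Comp C m' e) l"
          using keK cassoc[OF C R(1) e(1) m'(1)] e m' by simp
        finally show ?thesis using u by simp
      qed
      have c: "Comp C u' (Comp C uc eK) = Comp C u' u"
        using cassoc[OF C eK(1) uc(1) FP(4)] eK uc FP tKceK u by simp
      show ?thesis
        by (rule pb_uniq[OF C PB]) (use a b c u in \<open>auto simp: hom_def\<close>)
    qed
    have gR: "gR \<in> Arr C" "Dom C gR = Dom C gL" using po_facts[OF PO(1)] u unfolding hom_def by auto
    have gRuc: "Comp C gR uc \<in> Arr C" "Dom C (Comp C gR uc) = Dom C k" "Cod C (Comp C gR uc) = GR"
      using cc[OF C uc(1) gR(1)] uc gR PO by auto
    have e1: "Comp C (Comp C gR uc) eK = Comp C w r"
      using cassoc[OF C eK(1) uc(1) gR(1)] eK uc gR u_eq po_facts[OF PO(1)] by simp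
    obtain wc where wc: "wc \<in> Arr C" "Dom C wc = Cod C rc" "Cod C wc = GR"
        "Comp C wc rc = Comp C gR uc" "Comp C wc eR = w"
      using po_univ[OF POc gRuc(1), of w] gRuc eK FOc po_facts[OF PO(1)] e1 PO(2) by auto
    have POn: "is_pushout C uc rc gR wc"
      by (rule po_right[OF C POc _ uc(1) _ wc(1) wc(2) _ wc(4) wc(5)])
         (use PO u_eq uc eK wc in auto)
    have w'wc: "Comp C w' wc = tRc"
    proof (rule po_uniq[OF C POc])
      show "Comp C w' wc \<in> Arr C" using cc[OF C wc(1)] w' wc unfolding hom_def by auto
    next
      show "Comp C (Comp C w' wc) rc = Comp C tRc rc"
      proof -
        have wa: "w' \<in> Arr C" "Dom C w' = GR" using w' unfolding hom_def by auto
        have "Comp C (Comp C w' wc) rc = Comp C w' (Comp C gR uc)"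
          using cassoc[OF C FOc(3) wc(1) wa(1)] FOc wc wa by simp
        also have "\<dots> = Comp C (Comp C w' gR) uc"
          using cassoc[OF C uc(1) gR(1) wa(1)] uc gR wa PO(2) by simp
        also have "\<dots> = Comp C r' tKc"
          using w'(2) cassoc[OF C uc(1) FP(4) R(7)] uc FP R uc(5) by simp
        finally show ?thesis using tRc1 by simp
      qed
    next
      show "Comp C (Comp C w' wc) eR = Comp C tRc eR"
        using cassoc[OF C FOc(4) wc(1)] w' wc FOc tRc2 unfolding hom_def by auto
    qed (use w' wc tRc FOc in \<open>auto simp: hom_def dest: cc[OF C]\<close>)
    show "pbpo_step C k rc tLc tKc tRc l' r' m' \<alpha> GL GR"
      unfolding pbpo_step_def
      apply (intro conjI)
         prefer 4
         apply (rule exI[of _ gL], rule exI[of _ u'], rule exI[of _ uc], rule exI[of _ gR], rule exI[of _ wc], rule exI[of _ w'])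
      using m' FPc tLc alpha tLc_eq PB uc POn PO w' w'wc tRc unfolding hom_def by auto
  next
    fix \<alpha> GR
    assume S: "pbpo_step C k rc tLc tKc tRc l' r' m' \<alpha> GL GR"
    then obtain gL u' uc gR wc w' where
      al: "hom C \<alpha> GL (Cod C tLc)" "tLc = Comp C \<alpha> m'" and
      PB: "is_pullback C \<alpha> l' gL u'" and
      uc: "hom C uc (Dom C k) (Dom C gL)" "Comp C gL uc = Comp C m' k" "Comp C u' uc = tKc" and
      PO: "is_pushout C uc rc gR wc" "Cod C gR = GR" and
      w': "hom C w' GR (Cod C tRc)" "Comp C w' gR = Comp C r' u'" "Comp C w' wc = tRc"
      unfolding pbpo_step_def by blast
    note FP = pb_facts[OF PB] and FO = po_facts[OF PO(1)]
    have alpha: "\<alpha> \<in> Arr C" "Dom C \<alpha> = GL" "Cod C \<alpha> = Cod C tL" using al(1) tLc unfolding hom_def by auto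
    have ucA: "uc \<in> Arr C" "Dom C uc = Dom C k" "Cod C uc = Dom C gL" using uc(1) unfolding hom_def by auto
    have wa: "w' \<in> Arr C" "Dom C w' = GR" "Cod C w' = Cod C tR" using w'(1) tRc unfolding hom_def by auto
    have tL_eq: "tL = Comp C \<alpha> (Comp C m' e)"
      using assms(9) al(2) cassoc[OF C e(1) m'(1) alpha(1)] e m' alpha by simp
    have u1: "Comp C gL (Comp C uc eK) = Comp C (Comp C m' e) l"
    proof -
      have "Comp C gL (Comp C uc eK) = Comp C (Comp C gL uc) eK"
        using cassoc[OF C eK(1) ucA(1) FP(3)] eK ucA FP by simp
      also have "\<dots> = Comp C m' (Comp C k eK)"
        using uc cassoc[OF C eK(1) FPc(3) m'(1)] eK FPc tLc m' by simp
      also have "\<dots> = Comp C (Comp C m' e) l"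
        using keK cassoc[OF C R(1) e(1) m'(1)] e m' by simp
      finally show ?thesis .
    qed
    have u2: "Comp C u' (Comp C uc eK) = tK"
      using cassoc[OF C eK(1) ucA(1) FP(4)] eK ucA FP tKceK uc by simp
    have POo: "is_pushout C (Comp C uc eK) r gR (Comp C wc eR)"
      by (rule po_compose[OF C POc PO(1)])
    have w2: "Comp C w' (Comp C wc eR) = tR"
      using cassoc[OF C FOc(4) FO(4) wa(1)] FOc FO wa PO(2) w'(3) tRc2 by simp
    show "pbpo_step C l r tL tK tR l' r' (Comp C m' e) \<alpha> GL GR"
      unfolding pbpo_step_def
      apply (intro conjI)
         prefer 4
         apply (rule exI[of _ gL], rule exI[of _ u'], rule exI[of _ "Comp C uc eK"], rule exI[of _ gR],
                rule exI[of _ "Comp C wc eR"], rule exI[of _ w'])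
      using me alpha tL_eq PB u1 u2 POo PO w' wa w2 eK ucA cc[OF C eK(1) ucA(1)] unfolding hom_def by auto
  qed
qed

end
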